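(* Let $M=M_1\oplus M_2$ be a right $R$-module that is quasi-pseudo principally injective. Then $M_1$ is principally $M_2$-injective and $M_2$ is principally $M_1$-injective.
   Context: All rings are associative with identity and all modules are unitary right $R$-modules. A submodule $N$ of $M$ is called $M$-cyclic if $N\cong M/L$ for some submodule $L$ of $M$ (equivalently, $N$ is the image of an endomorphism of $M$). $M$ is quasi-pseudo principally injective if for every $M$-cyclic submodule $A$ of $M$, every $R$-monomorphism $A\to M$ extends to an $R$-endomorphism of $M$. For modules $X,Y$, $X$ is principally $Y$-injective if for every $Y$-cyclic submodule $A$ of $Y$, every $R$-homomorphism $A\to X$ extends to an $R$-homomorphism $Y\to X$. *)

theory Defs
  imports Main
begin

text \<open>A right R-module structure on the type 'm (the ambient module M is the
whole type), with ring R the type 'r; act x r stands for x r.\<close>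

definition right_module :: "('m::ab_group_add \<Rightarrow> 'r::ring_1 \<Rightarrow> 'm) \<Rightarrow> bool" where
  "right_module act \<longleftrightarrow>
     (\<forall>x y r. act (x + y) r = act x r + act y r) \<and>
     (\<forall>x r s. act x (r + s) = act x r + act x s) \<and>
     (\<forall>x r s. act x (r * s) = act (act x r) s) \<and>
     (\<forall>x. act x 1 = x)"

definition submodule :: "('m::ab_group_add \<Rightarrow> 'r::ring_1 \<Rightarrow> 'm) \<Rightarrow> 'm set \<Rightarrow> bool" where
  "submodule act N \<longleftrightarrow>
     0 \<in> N \<and> (\<forall>x\<in>N. \<forall>y\<in>N. x + y \<in> N) \<and> (\<forall>x\<in>N. - x \<in> N) \<and>
     (\<forall>x\<in>N. \<forall>r. act x r \<in> N)"

text \<open>R-homomorphisms from (submodule) A to (submodule) B, represented by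
functions on the ambient type; only their values on A matter.\<close>

definition module_hom :: "('m::ab_group_add \<Rightarrow> 'r::ring_1 \<Rightarrow> 'm) \<Rightarrow> 'm set \<Rightarrow> 'm set \<Rightarrow> ('m \<Rightarrow> 'm) \<Rightarrow> bool" where
  "module_hom act A B f \<longleftrightarrow>
     (\<forall>x\<in>A. f x \<in> B) \<and>
     (\<forall>x\<in>A. \<forall>y\<in>A. f (x + y) = f x + f y) \<and>
     (\<forall>x\<in>A. \<forall>r. f (act x r) = act (f x) r)"

definition cyclic_sub :: "('m::ab_group_add \<Rightarrow> 'r::ring_1 \<Rightarrow> 'm) \<Rightarrow> 'm set \<Rightarrow> 'm set \<Rightarrow> bool" where
  "cyclic_sub act Y A \<longleftrightarrow> (\<exists>h. module_hom act Y Y h \<and> h ` Y = A)"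

definition quasi_pseudo_principally_injective ::
  "('m::ab_group_add \<Rightarrow> 'r::ring_1 \<Rightarrow> 'm) \<Rightarrow> 'm set \<Rightarrow> bool" where
  "quasi_pseudo_principally_injective act M \<longleftrightarrow>
     (\<forall>A f. cyclic_sub act M A \<and> module_hom act A M f \<and> inj_on f A \<longrightarrow>
        (\<exists>g. module_hom act M M g \<and> (\<forall>x\<in>A. g x = f x)))"

definition principally_injective ::
  "('m::ab_group_add \<Rightarrow> 'r::ring_1 \<Rightarrow> 'm) \<Rightarrow> 'm set \<Rightarrow> 'm set \<Rightarrow> bool" where
  "principally_injective act X Y \<longleftrightarrow>
     (\<forall>A f. cyclic_sub act Y A \<and> module_hom act A X f \<longrightarrow>
        (\<exists>g. module_hom act Y X g \<and> (\<forall>x\<in>A. g x = f x)))"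

end

theory Submission
  imports Defs
begin

lemma core:
  fixes act :: "'m::ab_group_add \<Rightarrow> 'r::ring_1 \<Rightarrow> 'm"
    and M1 M2 :: "'m set"
  assumes rm: "right_module act"
    and s1: "submodule act M1" and s2: "submodule act M2"
    and dis: "M1 \<inter> M2 = {0}"
    and dec: "\<forall>x. \<exists>a b. a \<in> M1 \<and> b \<in> M2 \<and> x = a + b"
    and q: "quasi_pseudo_principally_injective act UNIV"
  shows "principally_injective act M1 M2"
proof -
  have add1: "\<And>x y. x \<in> M1 \<Longrightarrow> y \<in> M1 \<Longrightarrow> x + y \<in> M1"
    and neg1: "\<And>x. x \<in> M1 \<Longrightarrow> - x \<in> M1"
    and act1: "\<And>x r. x \<in> M1 \<Longrightarrow> act x r \<in> M1"
    and z1: "0 \<in> M1"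
    using s1 unfolding submodule_def by auto
  have add2: "\<And>x y. x \<in> M2 \<Longrightarrow> y \<in> M2 \<Longrightarrow> x + y \<in> M2"
    and neg2: "\<And>x. x \<in> M2 \<Longrightarrow> - x \<in> M2"
    and act2: "\<And>x r. x \<in> M2 \<Longrightarrow> act x r \<in> M2"
    and z2: "0 \<in> M2"
    using s2 unfolding submodule_def by auto
  have actadd: "\<And>x y r. act (x + y) r = act x r + act y r"
    using rm unfolding right_module_def by auto
  have uniq: "a = a' \<and> b = b'" if "a \<in> M1" "b \<in> M2" "a' \<in> M1" "b' \<in> M2" "a + b = a' + b'"
    for a b a' b'
  proof -
    have "a - a' = b' - b" using that(5) by (simp add: algebra_simps)
    moreover have "a - a' \<in> M1" using add1[OF that(1) neg1[OF that(3)]] by simp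
    moreover have "b' - b \<in> M2" using add2[OF that(4) neg2[OF that(2)]] by simp
    ultimately have "a - a' \<in> M1 \<inter> M2" by simp
    then have "a - a' = 0" using dis by blast
    then show ?thesis using that(5) by auto
  qed
  from dec obtain P1 P2 where P: "\<And>x. P1 x \<in> M1 \<and> P2 x \<in> M2 \<and> x = P1 x + P2 x"
    by metis
  have P1eq: "P1 (a + b) = a" and P2eq: "P2 (a + b) = b" if "a \<in> M1" "b \<in> M2" for a b
    using uniq[OF that, of "P1 (a+b)" "P2 (a+b)"] P[of "a+b"] by auto
  have P2add: "P2 (x + y) = P2 x + P2 y" for x y
  proof -
    have "x + y = (P1 x + P1 y) + (P2 x + P2 y)" using P[of x] P[of y]
      by (metis add.assoc add.commute)
    then show ?thesis using P2eq[OF add1 add2] P by metis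
  qed
  have P1add: "P1 (x + y) = P1 x + P1 y" for x y
  proof -
    have "x + y = (P1 x + P1 y) + (P2 x + P2 y)" using P[of x] P[of y]
      by (metis add.assoc add.commute)
    then show ?thesis using P1eq[OF add1 add2] P by metis
  qed
  have P2act: "P2 (act x r) = act (P2 x) r" for x r
  proof -
    have "act x r = act (P1 x) r + act (P2 x) r" using actadd P by metis
    then show ?thesis using P2eq[OF act1 act2] P by metis
  qed
  have P1act: "P1 (act x r) = act (P1 x) r" for x r
  proof -
    have "act x r = act (P1 x) r + act (P2 x) r" using actadd P by metis
    then show ?thesis using P1eq[OF act1 act2] P by metis
  qed
  show ?thesis unfolding principally_injective_def
  proof (intro allI impI, elim conjE)
    fix A f
    assume cA: "cyclic_sub act M2 A" and fh: "module_hom act A M1 f"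
    from cA obtain h where hh: "module_hom act M2 M2 h" and hA: "h ` M2 = A"
      unfolding cyclic_sub_def by auto
    have AM2: "A \<subseteq> M2" using hh hA unfolding module_hom_def by auto
    have fA: "\<And>x. x \<in> A \<Longrightarrow> f x \<in> M1" using fh unfolding module_hom_def by auto
    have cU: "cyclic_sub act UNIV A"
      unfolding cyclic_sub_def
    proof (intro exI conjI)
      show "module_hom act UNIV UNIV (h \<circ> P2)"
        using hh P unfolding module_hom_def by (auto simp: P2add P2act)
      have "P2 ` UNIV = M2"
      proof
        show "P2 ` UNIV \<subseteq> M2" using P by auto
        show "M2 \<subseteq> P2 ` UNIV"
        proof
          fix b assume "b \<in> M2"
          then have "P2 (0 + b) = b" using P2eq z1 by blast
          then show "b \<in> P2 ` UNIV" by (metis rangeI)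
        qed
      qed
      then show "(h \<circ> P2) ` UNIV = A" using hA by (metis image_comp)
    qed
    define phi where "phi = (\<lambda>a. a + f a)"
    have phih: "module_hom act A UNIV phi"
      using fh actadd unfolding module_hom_def phi_def by (auto simp: algebra_simps)
    have phii: "inj_on phi A"
    proof (rule inj_onI)
      fix x y assume "x \<in> A" "y \<in> A" "phi x = phi y"
      then have "f x + x = f y + y" unfolding phi_def by (simp add: add.commute)
      then show "x = y" using uniq fA AM2 \<open>x \<in> A\<close> \<open>y \<in> A\<close> by blast
    qed
    from q cU phih phii obtain g where gh: "module_hom act UNIV UNIV g"
      and ge: "\<forall>x\<in>A. g x = phi x"
      unfolding quasi_pseudo_principally_injective_def by blast
    show "\<exists>g. module_hom act M2 M1 g \<and> (\<forall>x\<in>A. g x = f x)"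
    proof (intro exI conjI)
      show "module_hom act M2 M1 (P1 \<circ> g)"
        using gh P unfolding module_hom_def by (auto simp: P1add P1act)
      show "\<forall>x\<in>A. (P1 \<circ> g) x = f x"
      proof
        fix x assume "x \<in> A"
        then have "g x = f x + x" using ge phi_def by (simp add: add.commute)
        then show "(P1 \<circ> g) x = f x" using P1eq fA AM2 \<open>x \<in> A\<close> by auto
      qed
    qed
  qed
qed

theorem proposition2p9:
  fixes act :: "'m::ab_group_add \<Rightarrow> 'r::ring_1 \<Rightarrow> 'm"
    and M1 M2 :: "'m set"
  assumes "right_module act"
    and "submodule act M1" and "submodule act M2"
    and "M1 \<inter> M2 = {0}"
    and "{a + b | a b. a \<in> M1 \<and> b \<in> M2} = UNIV"
    and "quasi_pseudo_principally_injective act UNIV"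
  shows "principally_injective act M1 M2 \<and> principally_injective act M2 M1"
proof
  have d: "\<forall>x. \<exists>a b. a \<in> M1 \<and> b \<in> M2 \<and> x = a + b"
  proof
    fix x
    have "x \<in> {a + b | a b. a \<in> M1 \<and> b \<in> M2}" using assms(5) by simp
    then show "\<exists>a b. a \<in> M1 \<and> b \<in> M2 \<and> x = a + b" by blast
  qed
  then show "principally_injective act M1 M2" using core[of act M1 M2] assms(1,2,3,4,6) by blast
  have "\<forall>x. \<exists>a b. a \<in> M2 \<and> b \<in> M1 \<and> x = a + b"
  proof
    fix x
    from d obtain a b where "a \<in> M1" "b \<in> M2" "x = a + b" by blast
    then show "\<exists>a b. a \<in> M2 \<and> b \<in> M1 \<and> x = a + b"
      by (intro exI[of _ b] exI[of _ a]) (simp add: add.commute)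
  qed
  moreover have "M2 \<inter> M1 = {0}" using assms(4) by blast
  ultimately show "principally_injective act M2 M1"
    using core[of act M2 M1] assms(1,2,3,6) by blast
qed

end
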